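(* Let $D(\mathbf x)\in\mathbb F^k[\mathbf x]$ have a cone-closed basis. Then $D$ is $(k+1)$-cone concentrated and $(\lg 2k)$-support concentrated.
   Context: For $D\in\mathbb F^k[\mathbf x]$, $\mathrm{lrsp}(D)$ is the span of its coefficient vectors in $\mathbb F^k$. A set of monomials is cone-closed if it contains all submonomials ($\mathbf x^{\mathbf e'}$ with $\mathbf e'\le\mathbf e$ coordinatewise) of each of its elements; $D$ has a cone-closed basis if some cone-closed set of monomials has coefficients forming a basis of $\mathrm{lrsp}(D)$. The cone-size of $\mathbf x^{\mathbf e}$ is $\prod_i(e_i+1)$; its support size is the number of $i$ with $e_i>0$. $D$ is $\ell$-cone concentrated (resp. $\ell$-support concentrated) if the coefficients of the monomials of cone-size $<\ell$ (resp. support size $<\ell$) span $\mathrm{lrsp}(D)$. *)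

theory Defs
  imports "HOL-Analysis.Analysis"
begin

text \<open>A polynomial D in F^k[x_1..x_n] is represented by its coefficient map:
  monomials x^e are exponent vectors e :: nat \<Rightarrow> nat (variables indexed 0..n-1),
  and D e :: 'a^'k is the coefficient vector of x^e. F^k is 'a^'k with k = CARD('k).\<close>

definition vpoly :: "nat \<Rightarrow> ((nat \<Rightarrow> nat) \<Rightarrow> 'a::field^'k) \<Rightarrow> bool" where
  "vpoly n D \<longleftrightarrow> finite {e. D e \<noteq> 0} \<and> (\<forall>e. D e \<noteq> 0 \<longrightarrow> (\<forall>i\<ge>n. e i = 0))"

definition lrsp :: "((nat \<Rightarrow> nat) \<Rightarrow> 'a::field^'k) \<Rightarrow> ('a^'k) set" where
  "lrsp D = vec.span (range D)"

definition cone_closed :: "(nat \<Rightarrow> nat) set \<Rightarrow> bool" where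
  "cone_closed S \<longleftrightarrow> (\<forall>e\<in>S. \<forall>e'. (\<forall>i. e' i \<le> e i) \<longrightarrow> e' \<in> S)"

definition has_cone_closed_basis :: "((nat \<Rightarrow> nat) \<Rightarrow> 'a::field^'k) \<Rightarrow> bool" where
  "has_cone_closed_basis D \<longleftrightarrow>
     (\<exists>S. cone_closed S \<and> inj_on D S \<and> vec.independent (D ` S) \<and> vec.span (D ` S) = lrsp D)"

definition cone_size :: "nat \<Rightarrow> (nat \<Rightarrow> nat) \<Rightarrow> nat" where
  "cone_size n e = (\<Prod>i<n. e i + 1)"

definition support_size :: "nat \<Rightarrow> (nat \<Rightarrow> nat) \<Rightarrow> nat" where
  "support_size n e = card {i. i < n \<and> 0 < e i}"

definition cone_concentrated :: "nat \<Rightarrow> real \<Rightarrow> ((nat \<Rightarrow> nat) \<Rightarrow> 'a::field^'k) \<Rightarrow> bool" where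
  "cone_concentrated n l D \<longleftrightarrow> vec.span (D ` {e. real (cone_size n e) < l}) = lrsp D"

definition support_concentrated :: "nat \<Rightarrow> real \<Rightarrow> ((nat \<Rightarrow> nat) \<Rightarrow> 'a::field^'k) \<Rightarrow> bool" where
  "support_concentrated n l D \<longleftrightarrow> vec.span (D ` {e. real (support_size n e) < l}) = lrsp D"

end

theory Submission
  imports Defs
begin

lemma cone_card_ge:
  fixes S :: "(nat \<Rightarrow> nat) set"
  assumes cc: "cone_closed S" and fin: "finite S" and eS: "e \<in> S"
  shows "cone_size n e \<le> card S"
proof -
  define g where "g = (\<lambda>f::nat\<Rightarrow>nat. \<lambda>i. if i < n then f i else 0)"
  define P where "P = PiE {..<n} (\<lambda>i. {0..e i})"
  have inj: "inj_on g P"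
  proof (rule inj_onI)
    fix f h assume f: "f \<in> P" and h: "h \<in> P" and eq: "g f = g h"
    show "f = h"
    proof
      fix i show "f i = h i"
      proof (cases "i < n")
        case True then show ?thesis using fun_cong[OF eq, of i] by (simp add: g_def)
      next
        case False then show ?thesis using f h by (auto simp: P_def PiE_def extensional_def)
      qed
    qed
  qed
  have sub: "g ` P \<subseteq> S"
  proof
    fix x assume "x \<in> g ` P"
    then obtain f where f: "f \<in> P" and x: "x = g f" by auto
    have "\<forall>i. x i \<le> e i" using f by (auto simp: x g_def P_def PiE_def Pi_def)
    then show "x \<in> S" using cc eS unfolding cone_closed_def by blast
  qed
  have "cone_size n e = card P"
    by (simp add: cone_size_def P_def card_PiE)
  also have "\<dots> = card (g ` P)" using card_image[OF inj] by simp
  also have "\<dots> \<le> card S" using card_mono[OF fin sub] .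
  finally show ?thesis .
qed

lemma support_le_cone: "2 ^ support_size n e \<le> cone_size n e"
proof -
  have "(2::nat) ^ support_size n e = (\<Prod>i\<in>{i\<in>{..<n}. 0 < e i}. 2)"
    by (simp add: support_size_def)
  also have "\<dots> = (\<Prod>i<n. if 0 < e i then 2 else 1)"
    by (subst prod.inter_filter) auto
  also have "\<dots> \<le> (\<Prod>i<n. e i + 1)"
    by (rule prod_mono) auto
  finally show ?thesis by (simp add: cone_size_def)
qed

theorem lemma4p1:
  fixes D :: "(nat \<Rightarrow> nat) \<Rightarrow> 'a::field ^ 'k" and n :: nat
  assumes "vpoly n D"
    and "has_cone_closed_basis D"
  shows "cone_concentrated n (real CARD('k) + 1) D
       \<and> support_concentrated n (log 2 (2 * real CARD('k))) D"
proof -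
  obtain S where cc: "cone_closed S" and inj: "inj_on D S"
    and ind: "vec.independent (D ` S)" and sp: "vec.span (D ` S) = lrsp D"
    using assms(2) unfolding has_cone_closed_basis_def by blast
  have finD: "finite (D ` S)" using vec.independent_bound_general[OF ind] by blast
  have fin: "finite S" using finD inj finite_image_iff by blast
  have "card (D ` S) \<le> vec.dim (UNIV :: ('a^'k) set)"
    by (rule vec.independent_card_le_dim[OF _ ind]) auto
  then have cS: "card S \<le> CARD('k)" using card_image[OF inj] vec_dim_card by metis
  have cone: "\<And>e. e \<in> S \<Longrightarrow> cone_size n e \<le> CARD('k)"
    using cone_card_ge[OF cc fin] cS le_trans by blast
  have gen: "vec.span (D ` T) = lrsp D" if "S \<subseteq> T" for T
  proof
    show "vec.span (D ` T) \<subseteq> lrsp D" unfolding lrsp_def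
      by (rule vec.span_mono) auto
    show "lrsp D \<subseteq> vec.span (D ` T)" unfolding sp[symmetric]
      by (rule vec.span_mono) (use that in auto)
  qed
  have A: "cone_concentrated n (real CARD('k) + 1) D"
    unfolding cone_concentrated_def
  proof (rule gen, rule subsetI)
    fix e assume "e \<in> S"
    then have "cone_size n e \<le> CARD('k)" by (rule cone)
    then show "e \<in> {e. real (cone_size n e) < real CARD('k) + 1}" by simp
  qed
  have B: "support_concentrated n (log 2 (2 * real CARD('k))) D"
    unfolding support_concentrated_def
  proof (rule gen, rule subsetI)
    fix e assume "e \<in> S"
    then have "2 ^ support_size n e \<le> CARD('k)" using cone support_le_cone le_trans by blast
    then have r: "(2::real) ^ support_size n e \<le> real CARD('k)"
      by (metis of_nat_le_iff of_nat_numeral of_nat_power)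
    have kpos: "real CARD('k) > 0" by simp
    have "real (support_size n e) = log 2 ((2::real) ^ support_size n e)"
      by (simp add: log_nat_power)
    also have "\<dots> \<le> log 2 (real CARD('k))"
      using r by (subst log_le_cancel_iff) auto
    also have "\<dots> < log 2 (2 * real CARD('k))"
      using kpos by (simp add: log_mult)
    finally show "e \<in> {e. real (support_size n e) < log 2 (2 * real CARD('k))}" by simp
  qed
  show ?thesis using A B by blast
qed

end
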